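(* Let $n,k,\bar k,\bar m$ be integers with $\bar k\ge2$, $\bar m\ge 2$, $\bar m\binom{\bar k}{2}=\binom{k}{2}$ and $\bar m\bar k\le n$. Let $A$ be a network (of the type below) on $\{1,\dots,n\}$ consisting of $\bar m$ pairwise disjoint mini fully connected networks each on $\bar k$ nodes (all pairs within each block linked, no other links), the remaining $n-\bar m\bar k$ nodes isolated; and let $B$ be a network consisting of one mini fully connected network on $k$ nodes and $n-k$ isolated nodes. Then (both networks have the same number of links and) $$\sum_{i=1}^n\Delta_i(A)\le\sum_{i=1}^n\Delta_i(B).$$
   Context: Version-age model. A gossip network on a finite node set $\mathcal N$ is specified by source rates $\lambda_{0j}>0$ and gossip rates $\lambda_{ij}\ge 0$ ($i\neq j$; rate at which $i$ sends to $j$); $\lambda_s>0$ is the source's update rate. For nonempty $S\subseteq\mathcal N$ let $N(S)=\{i\in\mathcal N\setminus S:\ \sum_{j\in S}\lambda_{ij}>0\}$ and define $$\Delta_S=\frac{\lambda_s+\sum_{i\in N(S)}\big(\sum_{j\in S}\lambda_{ij}\big)\Delta_{S\cup\{i\}}}{\sum_{j\in S}\lambda_{0j}+\sum_{i\in N(S)}\sum_{j\in S}\lambda_{ij}}$$ (well defined by downward induction on $|S|$); $\Delta_i=\Delta_{\{i\}}$, and $\Delta_i(G)$ denotes this quantity in network $G$. Networks with uniform link rate: node set $\{1,\dots,n\}$, $\lambda_{0j}=\lambda/n$ for all $j$, and a set of links (unordered pairs of distinct nodes); for each link $\{a,b\}$, $\lambda_{ab}=\lambda_{ba}=\lambda/n$,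 and $\lambda_{ab}=0$ otherwise. A node with no links is isolated. *)

theory Defs
  imports Complex_Main
begin

text \<open>General version-age network: node set N, source rates l0 j, gossip rates l i j
  (rate at which i sends to j), source update rate ls.\<close>

definition nbr :: "'a set \<Rightarrow> ('a \<Rightarrow> 'a \<Rightarrow> real) \<Rightarrow> 'a set \<Rightarrow> 'a set" where
  "nbr N l S = {i \<in> N - S. (\<Sum>j\<in>S. l i j) > 0}"

text \<open>Delta_S, computed by downward recursion on |S|; the first argument is a fuel
  counter which is always sufficient (see delta below).\<close>
fun deltaF :: "nat \<Rightarrow> 'a set \<Rightarrow> ('a \<Rightarrow> real) \<Rightarrow> ('a \<Rightarrow> 'a \<Rightarrow> real) \<Rightarrow> real \<Rightarrow> 'a set \<Rightarrow> real" where
  "deltaF 0 N l0 l ls S = 0"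
| "deltaF (Suc f) N l0 l ls S =
     (ls + (\<Sum>i\<in>nbr N l S. (\<Sum>j\<in>S. l i j) * deltaF f N l0 l ls (insert i S)))
     / ((\<Sum>j\<in>S. l0 j) + (\<Sum>i\<in>nbr N l S. \<Sum>j\<in>S. l i j))"

definition delta :: "'a set \<Rightarrow> ('a \<Rightarrow> real) \<Rightarrow> ('a \<Rightarrow> 'a \<Rightarrow> real) \<Rightarrow> real \<Rightarrow> 'a set \<Rightarrow> real" where
  "delta N l0 l ls S = deltaF (card N - card S + 1) N l0 l ls S"

definition unif_l0 :: "nat \<Rightarrow> real \<Rightarrow> nat \<Rightarrow> real" where
  "unif_l0 n lam j = lam / real n"

definition unif_l :: "nat \<Rightarrow> real \<Rightarrow> nat set set \<Rightarrow> nat \<Rightarrow> nat \<Rightarrow> real" where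
  "unif_l n lam E a b = (if a \<noteq> b \<and> {a, b} \<in> E then lam / real n else 0)"

definition delta_unif :: "nat \<Rightarrow> real \<Rightarrow> real \<Rightarrow> nat set set \<Rightarrow> nat \<Rightarrow> real" where
  "delta_unif n lam ls E i = delta {1..n} (unif_l0 n lam) (unif_l n lam E) ls {i}"

definition clique_links :: "nat \<Rightarrow> (nat \<Rightarrow> nat set) \<Rightarrow> nat set set" where
  "clique_links m C = {{a, b} | a b. a \<noteq> b \<and> (\<exists>t<m. a \<in> C t \<and> b \<in> C t)}"

end

theory Submission imports Defs begin

lemma sum_l_block:
  fixes n :: nat and lam :: real and E T S i
  assumes adj: "\<And>a b. a \<in> T \<Longrightarrow> b \<noteq> a \<Longrightarrow> ({a,b} \<in> E \<longleftrightarrow> b \<in> T)"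
    and ST: "S \<subseteq> T" and fin: "finite T" and iS: "i \<notin> S"
  shows "(\<Sum>j\<in>S. unif_l n lam E i j) = (if i \<in> T then real (card S) * (lam / real n) else 0)"
proof -
  have "\<And>j. j \<in> S \<Longrightarrow> unif_l n lam E i j = (if i \<in> T then lam / real n else 0)"
  proof -
    fix j assume j: "j \<in> S"
    then have "i \<noteq> j" using iS by auto
    moreover have "{i,j} = {j,i}" by auto
    ultimately show "unif_l n lam E i j = (if i \<in> T then lam / real n else 0)"
      using adj[of j i] j ST unfolding unif_l_def by auto
  qed
  then have "(\<Sum>j\<in>S. unif_l n lam E i j) = (\<Sum>j\<in>S. (if i \<in> T then lam / real n else 0))"
    by (rule sum.cong[OF refl])
  then show ?thesis by simp
qed

lemma nbr_block:
  fixes n :: nat and lam :: real and E T S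
  assumes adj: "\<And>a b. a \<in> T \<Longrightarrow> b \<noteq> a \<Longrightarrow> ({a,b} \<in> E \<longleftrightarrow> b \<in> T)"
    and ST: "S \<subseteq> T" and TN: "T \<subseteq> {1..n}" and Sne: "S \<noteq> {}" and lam: "lam > 0"
  shows "nbr {1..n} (unif_l n lam E) S = T - S"
proof -
  have fin: "finite T" using TN finite_subset by blast
  have cS: "card S > 0" using Sne ST fin finite_subset card_gt_0_iff by blast
  have n: "n > 0" using TN Sne ST by auto
  show ?thesis unfolding nbr_def using sum_l_block[OF adj ST fin] cS n lam TN
    by (auto simp: zero_less_mult_iff split: if_splits)
qed

lemma deltaF_block:
  fixes n :: nat and lam ls :: real and E T
  assumes adj: "\<And>a b. a \<in> T \<Longrightarrow> b \<noteq> a \<Longrightarrow> ({a,b} \<in> E \<longleftrightarrow> b \<in> T)"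
    and TN: "T \<subseteq> {1..n}" and lam: "lam > 0"
  shows "S \<subseteq> T \<Longrightarrow> S \<noteq> {} \<Longrightarrow> card T + 1 \<le> f + card S \<Longrightarrow>
    deltaF f {1..n} (unif_l0 n lam) (unif_l n lam E) ls S
      = (ls * real n / lam) * (\<Sum>j=card S..card T. 1 / real j) / real (card T - card S + 1)"
proof (induction f arbitrary: S)
  case 0
  have fin: "finite T" using TN finite_subset by blast
  have "card S \<le> card T" using 0 fin card_mono by blast
  then show ?case using 0 by simp
next
  case (Suc f)
  have fin: "finite T" using TN finite_subset by blast
  have finS: "finite S" using Suc fin finite_subset by blast
  have n: "n > 0" using TN Suc by auto
  define r where "r = lam / real n"
  have r: "r > 0" using n lam r_def by simp
  define s where "s = card S"
  define c where "c = card T"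
  have s1: "s \<ge> 1" using Suc finS s_def by (simp add: Suc_leI card_gt_0_iff)
  have sc: "s \<le> c" using Suc fin card_mono s_def c_def by blast
  have cTS: "card (T - S) = c - s" using Suc fin card_Diff_subset finS s_def c_def by metis
  have nb: "nbr {1..n} (unif_l n lam E) S = T - S" using nbr_block[OF adj Suc(2) TN Suc(3) lam] .
  have sl: "\<And>i. i \<in> T - S \<Longrightarrow> (\<Sum>j\<in>S. unif_l n lam E i j) = real s * r"
    using sum_l_block[OF adj Suc(2) fin] s_def r_def by auto
  have l0: "(\<Sum>j\<in>S. unif_l0 n lam j) = real s * r" unfolding unif_l0_def r_def s_def by simp
  have den: "(\<Sum>j\<in>S. unif_l0 n lam j) + (\<Sum>i\<in>T - S. \<Sum>j\<in>S. unif_l n lam E i j)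
      = real s * r * (real c - real s + 1)"
    using l0 sl cTS sc by (simp add: algebra_simps of_nat_diff)
  have eq: "deltaF (Suc f) {1..n} (unif_l0 n lam) (unif_l n lam E) ls S =
     (ls + (\<Sum>i\<in>T - S. (real s * r) * deltaF f {1..n} (unif_l0 n lam) (unif_l n lam E) ls (insert i S)))
     / (real s * r * (real c - real s + 1))"
    using sl den nb by simp
  show ?case
  proof (cases "s = c")
    case True
    then have e: "T - S = {}" using cTS fin by auto
    have "deltaF (Suc f) {1..n} (unif_l0 n lam) (unif_l n lam E) ls S = ls / (real s * r)"
      unfolding eq e using True by simp
    then show ?thesis using True r s1 unfolding r_def s_def c_def by (simp add: field_simps)
  next
    case False
    then have slt: "s < c" using sc by simp
    define h where "h = (\<Sum>j=Suc s..c. 1 / real j)"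
    have IH: "\<And>i. i \<in> T - S \<Longrightarrow> deltaF f {1..n} (unif_l0 n lam) (unif_l n lam E) ls (insert i S)
        = (ls / r) * h / (real c - real s)"
    proof -
      fix i assume i: "i \<in> T - S"
      have ci: "card (insert i S) = Suc s" using i finS s_def by simp
      have "deltaF f {1..n} (unif_l0 n lam) (unif_l n lam E) ls (insert i S)
          = (ls * real n / lam) * (\<Sum>j=Suc s..c. 1 / real j) / real (c - Suc s + 1)"
        using Suc.IH[of "insert i S"] i Suc(2,4) ci c_def s_def by auto
      also have "\<dots> = (ls / r) * h / (real c - real s)"
        using slt h_def r_def n by (simp add: of_nat_diff)
      finally show "deltaF f {1..n} (unif_l0 n lam) (unif_l n lam E) ls (insert i S)
        = (ls / r) * h / (real c - real s)" .
    qed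
    have "(\<Sum>i\<in>T - S. (real s * r) * deltaF f {1..n} (unif_l0 n lam) (unif_l n lam E) ls (insert i S))
       = (\<Sum>i\<in>T - S. (real s * r) * ((ls / r) * h / (real c - real s)))"
      using IH by simp
    also have "\<dots> = real s * ls * h" using cTS slt r by (simp add: of_nat_diff field_simps)
    finally have ssum: "(\<Sum>i\<in>T - S. (real s * r) * deltaF f {1..n} (unif_l0 n lam) (unif_l n lam E) ls (insert i S))
       = real s * ls * h" .
    have hs: "(\<Sum>j=s..c. 1 / real j) = 1 / real s + h"
      unfolding h_def using sum.atLeast_Suc_atMost[of s c "\<lambda>j. 1 / real j"] sc by simp
    have q: "ls * real n / lam = ls / r" using r_def n lam by simp
    have d: "real (c - s + 1) = real c - real s + 1" using slt by (simp add: of_nat_diff)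
    show ?thesis
      unfolding eq ssum s_def[symmetric] c_def[symmetric] hs q d using s1 r slt
      by (simp add: field_simps)
  qed
qed

lemma delta_unif_block:
  fixes n :: nat and lam ls :: real and E T i
  assumes adj: "\<And>a b. a \<in> T \<Longrightarrow> b \<noteq> a \<Longrightarrow> ({a,b} \<in> E \<longleftrightarrow> b \<in> T)"
    and TN: "T \<subseteq> {1..n}" and lam: "lam > 0" and iT: "i \<in> T"
  shows "delta_unif n lam ls E i = (ls * real n / lam) * (\<Sum>j=1..card T. 1 / real j) / real (card T)"
proof -
  have fin: "finite T" using TN finite_subset by blast
  have cT: "card T \<le> n" using card_mono[OF _ TN] by simp
  have "card T > 0" using iT fin card_gt_0_iff by blast
  then have c1: "card T \<ge> 1" by simp
  have "delta_unif n lam ls E i = deltaF (card {1..n} - card {i} + 1) {1..n} (unif_l0 n lam) (unif_l n lam E) ls {i}"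
    unfolding delta_unif_def delta_def by simp
  also have "\<dots> = (ls * real n / lam) * (\<Sum>j=card {i}..card T. 1 / real j) / real (card T - card {i} + 1)"
    by (rule deltaF_block[OF adj TN lam]) (use iT cT c1 in auto)
  also have "\<dots> = (ls * real n / lam) * (\<Sum>j=1..card T. 1 / real j) / real (card T)"
    using c1 by simp
  finally show ?thesis .
qed

lemma clique_links_eq:
  "clique_links m C = (\<Union>t<m. {B. B \<subseteq> C t \<and> card B = 2})"
  unfolding clique_links_def by (auto simp: card_2_iff)

lemma card_links:
  assumes "\<forall>t<m. finite (C t) \<and> card (C t) = c"
    and "\<forall>s<m. \<forall>t<m. s \<noteq> t \<longrightarrow> C s \<inter> C t = {}"
  shows "card (clique_links m C) = m * (c choose 2)"
proof -
  have "card (\<Union>t<m. {B. B \<subseteq> C t \<and> card B = 2}) = (\<Sum>t<m. card {B. B \<subseteq> C t \<and> card B = 2})"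
  proof (rule card_UN_disjoint)
    show "finite {..<m}" by simp
    show "\<forall>t\<in>{..<m}. finite {B. B \<subseteq> C t \<and> card B = 2}" using assms(1) by auto
    show "\<forall>i\<in>{..<m}. \<forall>j\<in>{..<m}. i \<noteq> j \<longrightarrow>
        {B. B \<subseteq> C i \<and> card B = 2} \<inter> {B. B \<subseteq> C j \<and> card B = 2} = {}"
    proof (intro ballI impI)
      fix i j assume "i \<in> {..<m}" "j \<in> {..<m}" "i \<noteq> j"
      then have "C i \<inter> C j = {}" using assms(2) by auto
      then show "{B. B \<subseteq> C i \<and> card B = 2} \<inter> {B. B \<subseteq> C j \<and> card B = 2} = {}"
        by (auto simp: card_2_iff)
    qed
  qed
  also have "\<dots> = (\<Sum>t<m. c choose 2)"
    using assms(1) by (intro sum.cong) (auto simp: n_subsets)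
  finally show ?thesis unfolding clique_links_eq by simp
qed

lemma adj_links:
  assumes "\<forall>s<m. \<forall>t<m. s \<noteq> t \<longrightarrow> C s \<inter> C t = {}"
    and "t < m" and "a \<in> C t" and "b \<noteq> a"
  shows "{a,b} \<in> clique_links m C \<longleftrightarrow> b \<in> C t"
proof
  assume "{a,b} \<in> clique_links m C"
  then obtain t' where t': "t' < m" "{a,b} \<subseteq> C t'" unfolding clique_links_eq by auto
  then have "t' = t" using assms by blast
  then show "b \<in> C t" using t' by auto
next
  assume "b \<in> C t"
  then show "{a,b} \<in> clique_links m C" unfolding clique_links_def using assms by blast
qed

lemma nonadj_links:
  assumes "\<forall>t<m. a \<notin> C t"
  shows "{a,b} \<notin> clique_links m C"
  using assms unfolding clique_links_eq by auto

definition Hn :: "nat \<Rightarrow> real" where "Hn c = (\<Sum>j=1..c. 1 / real j)"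

lemma Hn_Suc: "Hn (Suc c) = Hn c + 1 / real (Suc c)"
  unfolding Hn_def by simp

lemma F2: "c \<ge> 1 \<Longrightarrow> 2 * (real c - Hn c) \<ge> real c * (real c - 1) / (real c + 1)"
proof (induction c rule: dec_induct)
  case base
  then show ?case by (simp add: Hn_def)
next
  case (step c)
  have "2 * (real (Suc c) - Hn (Suc c)) = 2 * (real c - Hn c) + 2 * real c / (real c + 1)"
    unfolding Hn_Suc by (simp add: field_simps)
  also have "\<dots> \<ge> real c * (real c - 1) / (real c + 1) + 2 * real c / (real c + 1)"
    using step.IH by simp
  moreover have "real c * (real c - 1) / (real c + 1) + 2 * real c / (real c + 1) = real c"
  proof -
    have "real c * (real c - 1) / (real c + 1) + 2 * real c / (real c + 1)
        = (real c * (real c - 1) + 2 * real c) / (real c + 1)" by (simp add: add_divide_distrib)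
    also have "real c * (real c - 1) + 2 * real c = real c * (real c + 1)" by (simp add: algebra_simps)
    finally show ?thesis by simp
  qed
  ultimately have "2 * (real (Suc c) - Hn (Suc c)) \<ge> real c" by linarith
  moreover have "real c \<ge> real (Suc c) * (real (Suc c) - 1) / (real (Suc c) + 1)"
    by (simp add: field_simps)
  ultimately show ?case by linarith
qed

lemma Fmono: assumes a2: "2 \<le> a" and ab: "a \<le> b" shows
  "(real b - Hn b) * (real a * (real a - 1)) \<le> (real a - Hn a) * (real b * (real b - 1))"
  using ab
proof (induction b rule: dec_induct)
  case base
  then show ?case by simp
next
  case (step m)
  define fb where "fb = real m - Hn m"
  define fa where "fa = real a - Hn a"
  have b2: "real m \<ge> 2" using step a2 by simp
  have fb1: "real (Suc m) - Hn (Suc m) = fb + real m / (real m + 1)"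
    unfolding fb_def Hn_Suc by (simp add: field_simps)
  have key: "(real m - 1) * (real (Suc m) - Hn (Suc m)) \<le> (real m + 1) * fb"
  proof -
    have "2 * fb \<ge> real m * (real m - 1) / (real m + 1)" using F2[of m] step a2 fb_def by simp
    then have "2 * fb * (real m + 1) \<ge> real m * (real m - 1)" using b2 by (simp add: field_simps)
    then show ?thesis unfolding fb1 using b2 by (simp add: field_simps)
  qed
  have ih: "fb * (real a * (real a - 1)) \<le> fa * (real m * (real m - 1))"
    using step.IH fa_def fb_def by simp
  have aa: "real a * (real a - 1) \<ge> 0" using a2 by simp
  have "(real m - 1) * ((real (Suc m) - Hn (Suc m)) * (real a * (real a - 1)))
      \<le> (real m + 1) * fb * (real a * (real a - 1))"
    using mult_right_mono[OF key aa] by (simp add: algebra_simps)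
  also have "\<dots> \<le> (real m + 1) * (fa * (real m * (real m - 1)))"
    using mult_left_mono[OF ih, of "real m + 1"] b2 by (simp add: algebra_simps)
  also have "\<dots> = (real m - 1) * (fa * (real (Suc m) * (real (Suc m) - 1)))"
    by (simp add: algebra_simps)
  finally have "(real m - 1) * ((real (Suc m) - Hn (Suc m)) * (real a * (real a - 1)))
      \<le> (real m - 1) * (fa * (real (Suc m) * (real (Suc m) - 1)))" .
  then show ?case using b2 fa_def by (simp add: mult_le_cancel_left)
qed

lemma sum_split_const:
  fixes x y :: real
  assumes "finite A" "U \<subseteq> A"
  shows "(\<Sum>i\<in>A. if i \<in> U then x else y) = real (card U) * x + real (card A - card U) * y"
proof -
  have "(\<Sum>i\<in>A. if i \<in> U then x else y) = (\<Sum>i\<in>U. x) + (\<Sum>i\<in>A - U. y)"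
    using assms by (simp add: sum.If_cases Int_absorb1 Diff_eq[symmetric] Int_commute)
  also have "\<dots> = real (card U) * x + real (card A - card U) * y"
    using assms by (simp add: card_Diff_subset finite_subset)
  finally show ?thesis .
qed

lemma two_choose: "2 * (n choose 2) = n * (n - 1)"
  by (induction n) (auto simp: numeral_2_eq_2 algebra_simps)

lemma delta_links:
  fixes n m c :: nat and lam ls :: real and C :: "nat \<Rightarrow> nat set"
  assumes lam: "lam > 0"
    and CN: "\<forall>t<m. C t \<subseteq> {1..n} \<and> card (C t) = c"
    and disj: "\<forall>s<m. \<forall>t<m. s \<noteq> t \<longrightarrow> C s \<inter> C t = {}"
    and i: "i \<in> {1..n}"
  shows "delta_unif n lam ls (clique_links m C) i =
    (if i \<in> (\<Union>t<m. C t) then (ls * real n / lam) * Hn c / real c else ls * real n / lam)"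
proof (cases "i \<in> (\<Union>t<m. C t)")
  case True
  then obtain t where t: "t < m" "i \<in> C t" by auto
  have "delta_unif n lam ls (clique_links m C) i
      = (ls * real n / lam) * (\<Sum>j=1..card (C t). 1 / real j) / real (card (C t))"
    by (rule delta_unif_block[OF _ _ lam t(2)]) (use adj_links[OF disj t(1)] CN t(1) in auto)
  then show ?thesis using True CN t(1) by (simp add: Hn_def)
next
  case False
  have "delta_unif n lam ls (clique_links m C) i
      = (ls * real n / lam) * (\<Sum>j=1..card {i}. 1 / real j) / real (card {i})"
  proof (rule delta_unif_block[OF _ _ lam])
    show "{i} \<subseteq> {1..n}" using i by simp
    show "i \<in> {i}" by simp
    fix a b assume "a \<in> {i}" "b \<noteq> a"
    then show "({a, b} \<in> clique_links m C) = (b \<in> {i})"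
      using nonadj_links[of m a C b] False by auto
  qed
  then show ?thesis using False by simp
qed

theorem mainTheorem12:
  fixes n k kb mb :: nat and lam ls :: real
    and C :: "nat \<Rightarrow> nat set" and K :: "nat set"
  assumes "lam > 0" and "ls > 0"
    and "kb \<ge> 2" and "mb \<ge> 2"
    and "mb * (kb choose 2) = k choose 2"
    and "mb * kb \<le> n"
    and "\<forall>t<mb. C t \<subseteq> {1..n} \<and> card (C t) = kb"
    and "\<forall>s<mb. \<forall>t<mb. s \<noteq> t \<longrightarrow> C s \<inter> C t = {}"
    and "K \<subseteq> {1..n}" and "card K = k"
  shows "card (clique_links mb C) = card (clique_links 1 (\<lambda>_. K)) \<and>
    (\<Sum>i=1..n. delta_unif n lam ls (clique_links mb C) i)
      \<le> (\<Sum>i=1..n. delta_unif n lam ls (clique_links 1 (\<lambda>_. K)) i)"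
proof
  have finC: "\<forall>t<mb. finite (C t) \<and> card (C t) = kb"
    using assms(7) finite_subset by blast
  have finK: "finite K" using assms(9) finite_subset by blast
  have disjK: "\<forall>s::nat<1. \<forall>t::nat<1. s \<noteq> t \<longrightarrow> (\<lambda>_. K) s \<inter> (\<lambda>_. K) t = {}" by (auto simp: less_Suc_eq)
  show "card (clique_links mb C) = card (clique_links 1 (\<lambda>_. K))"
    using card_links[OF finC assms(8)] card_links[of 1 "\<lambda>_. K" k] finK assms(10) assms(5) by simp
  define Q where "Q = ls * real n / lam"
  define U where "U = (\<Union>t<mb. C t)"
  have UN: "U \<subseteq> {1..n}" using assms(7) U_def by auto
  have cU: "card U = mb * kb"
    unfolding U_def using finC assms(8) by (subst card_UN_disjoint) auto
  have KU: "(\<Union>t::nat<1. (\<lambda>_. K) t) = K" by (simp add: lessThan_Suc)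
  have sA: "(\<Sum>i=1..n. delta_unif n lam ls (clique_links mb C) i)
      = (\<Sum>i=1..n. if i \<in> U then Q * Hn kb / real kb else Q)"
    using delta_links[OF assms(1) assms(7) assms(8)] unfolding U_def Q_def by (intro sum.cong) auto
  have sB: "(\<Sum>i=1..n. delta_unif n lam ls (clique_links 1 (\<lambda>_. K)) i)
      = (\<Sum>i=1..n. if i \<in> K then Q * Hn k / real k else Q)"
  proof (intro sum.cong refl)
    fix i assume "i \<in> {1..n}"
    then show "delta_unif n lam ls (clique_links 1 (\<lambda>_. K)) i = (if i \<in> K then Q * Hn k / real k else Q)"
    proof -
      assume i: "i \<in> {1..n}"
      have "delta_unif n lam ls (clique_links 1 (\<lambda>_. K)) i =
        (if i \<in> (\<Union>t::nat<1. (\<lambda>_. K) t) then (ls * real n / lam) * Hn k / real k else ls * real n / lam)"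
        by (rule delta_links[OF assms(1) _ disjK i]) (use assms(9,10) in auto)
      then show ?thesis unfolding KU Q_def by simp
    qed
  qed
  have A: "(\<Sum>i=1..n. delta_unif n lam ls (clique_links mb C) i)
      = real (mb * kb) * (Q * Hn kb / real kb) + real (n - mb * kb) * Q"
    unfolding sA using sum_split_const[OF _ UN] cU by simp
  have B: "(\<Sum>i=1..n. delta_unif n lam ls (clique_links 1 (\<lambda>_. K)) i)
      = real k * (Q * Hn k / real k) + real (n - k) * Q"
    unfolding sB using sum_split_const[OF _ assms(9)] assms(10) by simp
  have kn: "k \<le> n" using card_mono[OF _ assms(9)] assms(10) by simp
  have eqn: "k * (k - 1) = mb * (kb * (kb - 1))"
    using two_choose[of k] two_choose[of kb] assms(5) by (metis mult.left_commute)
  have kbpos: "kb * (kb - 1) > 0" using assms(3) by simp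
  have kbk: "kb \<le> k"
  proof (rule ccontr)
    assume "\<not> kb \<le> k"
    then have "k * (k - 1) \<le> kb * (kb - 1)" by (intro mult_le_mono) auto
    moreover have "mb * (kb * (kb - 1)) \<ge> 2 * (kb * (kb - 1))" using assms(4) by simp
    ultimately show False using eqn kbpos by linarith
  qed
  have k1: "k \<ge> 1" using kbk assms(3) by simp
  have eqr: "real k * (real k - 1) = real mb * (real kb * (real kb - 1))"
  proof -
    have "real (k * (k - 1)) = real (mb * (kb * (kb - 1)))" using eqn by simp
    then show ?thesis using k1 assms(3) by (simp add: of_nat_diff)
  qed
  have fm: "(real k - Hn k) * (real kb * (real kb - 1)) \<le> (real kb - Hn kb) * (real k * (real k - 1))"
    using Fmono[OF assms(3) kbk] .
  have kbr: "real kb * (real kb - 1) > 0" using assms(3) by simp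
  have ineq: "real k - Hn k \<le> real mb * (real kb - Hn kb)"
  proof -
    have "(real k - Hn k) * (real kb * (real kb - 1)) \<le> (real mb * (real kb - Hn kb)) * (real kb * (real kb - 1))"
    proof -
      have e: "(real mb * (real kb - Hn kb)) * (real kb * (real kb - 1))
          = (real kb - Hn kb) * (real mb * (real kb * (real kb - 1)))" by (simp only: mult_ac)
      show ?thesis unfolding e using fm[unfolded eqr] .
    qed
    then show ?thesis using kbr by (simp add: mult_le_cancel_right)
  qed
  have "2 * 2 \<le> mb * kb" using mult_le_mono[OF assms(4) assms(3)] .
  then have npos: "n > 0" using assms(6) by linarith
  have Qp: "Q > 0" using assms(1,2) npos unfolding Q_def by simp
  have kbp: "real kb > 0" using assms(3) by simp
  have kp: "real k > 0" using k1 by simp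
  have A': "real (mb * kb) * (Q * Hn kb / real kb) + real (n - mb * kb) * Q
      = Q * (real mb * Hn kb + real n - real mb * real kb)"
    using kbp assms(6) by (simp add: of_nat_diff field_simps)
  have B': "real k * (Q * Hn k / real k) + real (n - k) * Q = Q * (Hn k + real n - real k)"
    using kp kn by (simp add: of_nat_diff field_simps)
  show "(\<Sum>i=1..n. delta_unif n lam ls (clique_links mb C) i)
      \<le> (\<Sum>i=1..n. delta_unif n lam ls (clique_links 1 (\<lambda>_. K)) i)"
    unfolding A B A' B' using Qp ineq by (intro mult_left_mono) (auto simp: algebra_simps)
qed

end
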